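(* Let \(\mathcal{I}\) be an instance of 3-SAT and let \(G(\mathcal{I})\), \(T(\mathcal{I})\) be as constructed below. If \(\mathcal{I}\) does not have a satisfying assignment, then \(T(\mathcal{I})\) is not the \(\mathcal{F}\)-tree of any MNS ordering of \(G(\mathcal{I})\), and therefore also not the \(\mathcal{F}\)-tree of any MCS ordering of \(G(\mathcal{I})\).
   Context: Let \(\mathcal{I}\) have variables \(x_1,\dots,x_k\) and clauses \(C_1,\dots,C_l\), each a disjunction of three literals. \(G(\mathcal{I})\) has vertices: literal vertices \(X=\{x_1,\dots,x_k,\overline{x_1},\dots,\overline{x_k}\}\), clause vertices \(c_1,\dots,c_l\), and six vertices \(r,p,q,a,b,t\). Edges: any two vertices of \(X\) are adjacent except the pairs \(x_j\overline{x_j}\); the clause vertices are pairwise nonadjacent; \(c_i\) is adjacent to every vertex of \(X\) except the three literal vertices of the literals of \(C_i\); each of \(r,p,q,a\) is adjacent to all literal vertices and all clause vertices; \(b\) is adjacent to all literal vertices; additionally the edges \(ab,ap,aq,bq,br,bt,pr,qr,qt\); no other edges. \(T(\mathcal{I})\) is the spanning tree consisting of all edges of \(G(\mathcal{I})\) incident to \(r\) together with the edges \(pa\) and \(bt\). With \(n\) the number of vertices: an MCS ordering is produced by repeatedly choosing an unnumbered vertex with the largest number of numbered neighbors; an MNS ordering uses set labels (all \(\emptyset\), start vertex gets \(\{n+1\}\); repeatedly pick an unnumbered vertex with inclusion-maximal label as \(v_j\) and add \(j\) to the labels of its unnumbered neighbors); ties are arbitrary. The \(\mathcal{F}\)-tree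 of an ordering \((v_1,\dots,v_n)\) has, for each \(v\ne v_1\), an edge from \(v\) to its leftmost neighbor in the ordering. *)

theory Defs
  imports Main
begin

text \<open>A literal is a pair (i, b): (i, True) is x_i, (i, False) is the negation of x_i.\<close>

type_synonym literal = "nat \<times> bool"
type_synonym clause = "literal list"

definition wf_instance :: "nat \<Rightarrow> clause list \<Rightarrow> bool" where
  "wf_instance k cls \<longleftrightarrow> (\<forall>C \<in> set cls. length C = 3 \<and> (\<forall>(i,b) \<in> set C. i < k))"

definition satisfiable :: "nat \<Rightarrow> clause list \<Rightarrow> bool" where
  "satisfiable k cls \<longleftrightarrow> (\<exists>\<alpha> :: nat \<Rightarrow> bool. \<forall>C \<in> set cls. \<exists>(i,b) \<in> set C. \<alpha> i = b)"

datatype vert = Lit nat bool | Cl nat | Rv | Pv | Qv | Av | Bv | Tv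

definition verts :: "nat \<Rightarrow> clause list \<Rightarrow> vert set" where
  "verts k cls = {Lit i b | i b. i < k} \<union> {Cl j | j. j < length cls} \<union> {Rv, Pv, Qv, Av, Bv, Tv}"

text \<open>One direction of each edge of G(I); the graph is its symmetric closure on the vertex set.\<close>
fun edge0 :: "clause list \<Rightarrow> vert \<Rightarrow> vert \<Rightarrow> bool" where
  "edge0 cls (Lit i b) (Lit j c) = (i \<noteq> j)"
| "edge0 cls (Cl j) (Lit i b) = ((i, b) \<notin> set (cls ! j))"
| "edge0 cls Rv (Lit i b) = True"
| "edge0 cls Pv (Lit i b) = True"
| "edge0 cls Qv (Lit i b) = True"
| "edge0 cls Av (Lit i b) = True"
| "edge0 cls Bv (Lit i b) = True"
| "edge0 cls Rv (Cl j) = True"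
| "edge0 cls Pv (Cl j) = True"
| "edge0 cls Qv (Cl j) = True"
| "edge0 cls Av (Cl j) = True"
| "edge0 cls Av Bv = True"
| "edge0 cls Av Pv = True"
| "edge0 cls Av Qv = True"
| "edge0 cls Bv Qv = True"
| "edge0 cls Bv Rv = True"
| "edge0 cls Bv Tv = True"
| "edge0 cls Pv Rv = True"
| "edge0 cls Qv Rv = True"
| "edge0 cls Qv Tv = True"
| "edge0 cls _ _ = False"

definition G_adj :: "nat \<Rightarrow> clause list \<Rightarrow> vert \<Rightarrow> vert \<Rightarrow> bool" where
  "G_adj k cls x y \<longleftrightarrow> x \<in> verts k cls \<and> y \<in> verts k cls \<and> (edge0 cls x y \<or> edge0 cls y x)"

definition G_edges :: "nat \<Rightarrow> clause list \<Rightarrow> vert set set" where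
  "G_edges k cls = {{x, y} | x y. G_adj k cls x y}"

definition T_edges :: "nat \<Rightarrow> clause list \<Rightarrow> vert set set" where
  "T_edges k cls = {e \<in> G_edges k cls. Rv \<in> e} \<union> {{Pv, Av}, {Bv, Tv}}"

text \<open>Orderings are lists (v_1,...,v_n) = (\<sigma>!0,...,\<sigma>!(n-1)) listing every vertex exactly once.\<close>
definition is_ordering :: "'v set \<Rightarrow> 'v list \<Rightarrow> bool" where
  "is_ordering V \<sigma> \<longleftrightarrow> distinct \<sigma> \<and> set \<sigma> = V"

definition is_MCS :: "'v set \<Rightarrow> ('v \<Rightarrow> 'v \<Rightarrow> bool) \<Rightarrow> 'v list \<Rightarrow> bool" where
  "is_MCS V adj \<sigma> \<longleftrightarrow> is_ordering V \<sigma> \<and>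
     (\<forall>j < length \<sigma>. \<forall>w \<in> V - set (take j \<sigma>).
        card {u \<in> set (take j \<sigma>). adj w u} \<le> card {u \<in> set (take j \<sigma>). adj (\<sigma>!j) u})"

text \<open>MNS label of vertex w after v_1..v_j have been numbered (positions numbered 1..n;
  the start vertex v_1 initially gets label {n+1}).\<close>
definition mns_label :: "('v \<Rightarrow> 'v \<Rightarrow> bool) \<Rightarrow> 'v list \<Rightarrow> nat \<Rightarrow> 'v \<Rightarrow> nat set" where
  "mns_label adj \<sigma> j w =
     (if w = \<sigma>!0 then {length \<sigma> + 1} else {}) \<union> {i + 1 | i. i < j \<and> adj (\<sigma>!i) w}"

definition is_MNS :: "'v set \<Rightarrow> ('v \<Rightarrow> 'v \<Rightarrow> bool) \<Rightarrow> 'v list \<Rightarrow> bool" where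
  "is_MNS V adj \<sigma> \<longleftrightarrow> is_ordering V \<sigma> \<and>
     (\<forall>j < length \<sigma>. \<forall>w \<in> V - set (take j \<sigma>).
        \<not> (mns_label adj \<sigma> j (\<sigma>!j) \<subset> mns_label adj \<sigma> j w))"

definition F_tree :: "('v \<Rightarrow> 'v \<Rightarrow> bool) \<Rightarrow> 'v list \<Rightarrow> 'v set set" where
  "F_tree adj \<sigma> = {{\<sigma>!j, \<sigma>!(LEAST i. i < length \<sigma> \<and> adj (\<sigma>!j) (\<sigma>!i))} | j. 0 < j \<and> j < length \<sigma>}"

end

theory Submission
  imports Defs
begin


definition searchP :: "('v \<Rightarrow> 'v \<Rightarrow> bool) \<Rightarrow> 'v list \<Rightarrow> bool" where
  "searchP adj \<sigma> \<longleftrightarrow> (\<forall>j. 1 \<le> j \<and> j < length \<sigma> \<longrightarrow> (\<forall>w. w \<in> set \<sigma> \<and> w \<notin> set (take j \<sigma>) \<longrightarrow>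
     \<not> ({i. i < j \<and> adj (\<sigma>!i) (\<sigma>!j)} \<subset> {i. i < j \<and> adj (\<sigma>!i) w})))"

lemma mns_P:
  assumes "is_MNS V adj \<sigma>" shows "searchP adj \<sigma>"
  unfolding searchP_def
proof (intro allI impI)
  fix j w assume j: "1 \<le> j \<and> j < length \<sigma>" and w: "w \<in> set \<sigma> \<and> w \<notin> set (take j \<sigma>)"
  have d: "distinct \<sigma>" "set \<sigma> = V" using assms by (auto simp: is_MNS_def is_ordering_def)
  have "\<sigma>!0 \<in> set (take j \<sigma>)" using j by (cases \<sigma>; cases j) auto
  hence w0: "w \<noteq> \<sigma>!0" using w by auto
  have j0: "\<sigma>!j \<noteq> \<sigma>!0"
  proof
    assume "\<sigma>!j = \<sigma>!0"
    moreover have "j < length \<sigma>" "0 < length \<sigma>" using j by auto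
    ultimately have "j = 0" using nth_eq_iff_index_eq[OF d(1), of j 0] by blast
    thus False using j by simp
  qed
  have all: "\<forall>j < length \<sigma>. \<forall>w \<in> V - set (take j \<sigma>).
        \<not> (mns_label adj \<sigma> j (\<sigma>!j) \<subset> mns_label adj \<sigma> j w)"
    using assms unfolding is_MNS_def by (rule conjunct2)
  have "j < length \<sigma>" "w \<in> V - set (take j \<sigma>)" using j w d by auto
  from all[rule_format, OF this]
  have ns: "\<not> (mns_label adj \<sigma> j (\<sigma>!j) \<subset> mns_label adj \<sigma> j w)" .
  have lab: "mns_label adj \<sigma> j x = (\<lambda>i. i+1) ` {i. i < j \<and> adj (\<sigma>!i) x}" if "x \<noteq> \<sigma>!0" for x
    using that unfolding mns_label_def by auto
  have inj: "inj (\<lambda>i::nat. i+1)" by (simp add: inj_def)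
  show "\<not> ({i. i < j \<and> adj (\<sigma>!i) (\<sigma>!j)} \<subset> {i. i < j \<and> adj (\<sigma>!i) w})"
    using ns unfolding lab[OF w0] lab[OF j0] psubset_eq inj_image_subset_iff[OF inj] inj_image_eq_iff[OF inj] .
qed

lemma set_take_img: "j \<le> length \<sigma> \<Longrightarrow> set (take j \<sigma>) = (\<lambda>i. \<sigma>!i) ` {..<j}"
proof (induction j)
  case 0 then show ?case by simp
next
  case (Suc j)
  hence "take (Suc j) \<sigma> = take j \<sigma> @ [\<sigma>!j]" by (simp add: take_Suc_conv_app_nth)
  then show ?case using Suc by (simp add: lessThan_Suc)
qed

lemma mcs_P:
  assumes "is_MCS V adj \<sigma>" and sym: "\<And>x y. adj x y \<longleftrightarrow> adj y x" shows "searchP adj \<sigma>"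
  unfolding searchP_def
proof (intro allI impI notI)
  fix j w assume j: "1 \<le> j \<and> j < length \<sigma>" and w: "w \<in> set \<sigma> \<and> w \<notin> set (take j \<sigma>)"
    and ps: "{i. i < j \<and> adj (\<sigma>!i) (\<sigma>!j)} \<subset> {i. i < j \<and> adj (\<sigma>!i) w}"
  have d: "distinct \<sigma>" "set \<sigma> = V" using assms by (auto simp: is_MCS_def is_ordering_def)
  have st: "set (take j \<sigma>) = (\<lambda>i. \<sigma>!i) ` {..<j}" using j by (intro set_take_img) simp
  have inj: "inj_on (\<lambda>i. \<sigma>!i) {..<j}" using d j by (auto simp: inj_on_def nth_eq_iff_index_eq)
  have eq: "{u \<in> set (take j \<sigma>). adj x u} = (\<lambda>i. \<sigma>!i) ` {i. i < j \<and> adj (\<sigma>!i) x}" for x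
  proof -
    have "{u \<in> (\<lambda>i. \<sigma>!i) ` {..<j}. adj x u} = (\<lambda>i. \<sigma>!i) ` {i. i < j \<and> adj x (\<sigma>!i)}" by auto
    also have "{i. i < j \<and> adj x (\<sigma>!i)} = {i. i < j \<and> adj (\<sigma>!i) x}" by (simp add: sym[of x])
    finally show ?thesis unfolding st .
  qed
  have cq: "card {u \<in> set (take j \<sigma>). adj x u} = card {i. i < j \<and> adj (\<sigma>!i) x}" for x
    unfolding eq by (rule card_image) (rule inj_on_subset[OF inj], auto)
  have "card {i. i < j \<and> adj (\<sigma>!i) (\<sigma>!j)} < card {i. i < j \<and> adj (\<sigma>!i) w}"
    using ps by (intro psubset_card_mono) auto
  moreover have "card {u \<in> set (take j \<sigma>). adj w u} \<le> card {u \<in> set (take j \<sigma>). adj (\<sigma>!j) u}"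
  proof -
    have all: "\<forall>j < length \<sigma>. \<forall>w \<in> V - set (take j \<sigma>).
        card {u \<in> set (take j \<sigma>). adj w u} \<le> card {u \<in> set (take j \<sigma>). adj (\<sigma>!j) u}"
      using assms(1) unfolding is_MCS_def by (rule conjunct2)
    have "j < length \<sigma>" "w \<in> V - set (take j \<sigma>)" using j w d by auto
    from all[rule_format, OF this] show ?thesis .
  qed
  ultimately show False using cq[of w] cq[of "\<sigma>!j"] by linarith
qed

lemma F_mem:
  assumes "distinct \<sigma>" "j < length \<sigma>" "0 < j" "i < length \<sigma>" "adj (\<sigma>!j) (\<sigma>!i)"
    "\<forall>i'<i. \<not> adj (\<sigma>!j) (\<sigma>!i')"
  shows "{\<sigma>!j, \<sigma>!i} \<in> F_tree adj \<sigma>"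
proof -
  have "(LEAST i'. i' < length \<sigma> \<and> adj (\<sigma>!j) (\<sigma>!i')) = i"
    using assms by (intro Least_equality) (auto simp: not_less[symmetric])
  thus ?thesis unfolding F_tree_def using assms by auto
qed

lemma in_verts[simp]: "Lit i b \<in> verts k cls \<longleftrightarrow> i < k" "Cl j \<in> verts k cls \<longleftrightarrow> j < length cls"
  "Rv \<in> verts k cls" "Pv \<in> verts k cls" "Qv \<in> verts k cls" "Av \<in> verts k cls" "Bv \<in> verts k cls" "Tv \<in> verts k cls"
  by (auto simp: verts_def)

lemma G_sym: "G_adj k cls x y \<longleftrightarrow> G_adj k cls y x" by (auto simp: G_adj_def)

lemma T_noR: "x \<noteq> Rv \<Longrightarrow> y \<noteq> Rv \<Longrightarrow> {x,y} \<in> T_edges k cls \<Longrightarrow> {x,y} = {Pv,Av} \<or> {x,y} = {Bv,Tv}"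
  unfolding T_edges_def G_edges_def by auto

lemma adj_RA: "G_adj k cls Rv v \<Longrightarrow> G_adj k cls Av v"
  by (cases v) (auto simp: G_adj_def)

lemma adj_BQ: "v \<noteq> Qv \<Longrightarrow> G_adj k cls v Bv \<Longrightarrow> G_adj k cls v Qv"
  by (cases v) (auto simp: G_adj_def)

lemma adj_T: "G_adj k cls v Tv \<Longrightarrow> v = Bv \<or> v = Qv"
  by (cases v) (auto simp: G_adj_def)



lemma main:
  assumes wf: "wf_instance k cls" and uns: "\<not> satisfiable k cls"
    and ord: "is_ordering (verts k cls) \<sigma>" and P: "searchP (G_adj k cls) \<sigma>"
    and FT: "F_tree (G_adj k cls) \<sigma> = T_edges k cls"
  shows False
proof -
  let ?V = "verts k cls" and ?adj = "G_adj k cls"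
  have dist: "distinct \<sigma>" and setV: "set \<sigma> = ?V" using ord by (auto simp: is_ordering_def)
  have "cls \<noteq> []" using uns by (auto simp: satisfiable_def)
  hence c0: "cls ! 0 \<in> set cls" by simp
  hence "length (cls ! 0) = 3" using wf unfolding wf_instance_def by blast
  hence "cls ! 0 \<noteq> []" by auto
  hence "hd (cls ! 0) \<in> set (cls ! 0)" by simp
  moreover obtain i0 b0 where "hd (cls ! 0) = (i0, b0)" by (cases "hd (cls ! 0)") simp
  ultimately have ib: "(i0, b0) \<in> set (cls ! 0)" by simp
  have "\<forall>(i,b) \<in> set (cls ! 0). i < k" using wf c0 unfolding wf_instance_def by blast
  hence "i0 < k" using ib by blast
  define pos where "pos v = (LEAST i. \<sigma>!i = v)" for v
  have pos: "pos v < length \<sigma> \<and> \<sigma> ! pos v = v" if "v \<in> ?V" for v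
  proof -
    have "v \<in> set \<sigma>" using that setV by simp
    then obtain i where i: "i < length \<sigma>" "\<sigma>!i = v" by (auto simp: in_set_conv_nth)
    have "pos v = i" unfolding pos_def
    proof (rule Least_equality)
      show "\<sigma>!i = v" by fact
      fix y assume y: "\<sigma>!y = v"
      show "i \<le> y"
      proof (rule ccontr)
        assume "\<not> i \<le> y"
        hence "y < i" by simp
        hence "y = i" using nth_eq_iff_index_eq[OF dist, of y i] i y by simp
        thus False using \<open>y < i\<close> by simp
      qed
    qed
    thus ?thesis using i by simp
  qed
  have pos_eq: "pos (\<sigma>!i) = i" if "i < length \<sigma>" for i
  proof -
    have "\<sigma>!i \<in> ?V" using that setV nth_mem by blast
    hence "pos (\<sigma>!i) < length \<sigma>" "\<sigma> ! pos (\<sigma>!i) = \<sigma>!i" using pos[of "\<sigma>!i"] by blast+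
    thus ?thesis using nth_eq_iff_index_eq[OF dist, of "pos (\<sigma>!i)" i] that by blast
  qed
  have inV: "\<sigma>!i \<in> ?V" if "i < length \<sigma>" for i using that setV nth_mem by blast
  have in_take: "v \<in> set (take j \<sigma>) \<longleftrightarrow> pos v < j" if "v \<in> ?V" for v j
  proof
    assume "v \<in> set (take j \<sigma>)"
    then obtain i where i: "i < length (take j \<sigma>)" "take j \<sigma> ! i = v"
      using in_set_conv_nth[of v "take j \<sigma>"] by blast
    have ij: "i < j" "i < length \<sigma>" using i(1) by simp_all
    have "\<sigma> ! i = v" using i(2) nth_take[OF ij(1), of \<sigma>] by simp
    hence "pos v = i" using pos_eq[OF ij(2)] by simp
    thus "pos v < j" using ij by simp
  next
    assume a: "pos v < j"
    have b: "pos v < length \<sigma>" "\<sigma> ! pos v = v" using pos[OF that] by simp_all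
    have "pos v < length (take j \<sigma>)" using a b by simp
    moreover have "take j \<sigma> ! pos v = v" using a b nth_take[OF a, of \<sigma>] by simp
    ultimately show "v \<in> set (take j \<sigma>)" using nth_mem[of "pos v" "take j \<sigma>"] by simp
  qed
  have Pj: "\<not> ({i. i < j \<and> ?adj (\<sigma>!i) (\<sigma>!j)} \<subset> {i. i < j \<and> ?adj (\<sigma>!i) w})"
    if "1 \<le> j" "j < length \<sigma>" "w \<in> ?V" "j \<le> pos w" for j w
  proof -
    have all: "\<forall>j. 1 \<le> j \<and> j < length \<sigma> \<longrightarrow> (\<forall>w. w \<in> set \<sigma> \<and> w \<notin> set (take j \<sigma>) \<longrightarrow>
     \<not> ({i. i < j \<and> ?adj (\<sigma>!i) (\<sigma>!j)} \<subset> {i. i < j \<and> ?adj (\<sigma>!i) w}))"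
      using P unfolding searchP_def .
    have "w \<in> set \<sigma>" using that setV by simp
    moreover have "w \<notin> set (take j \<sigma>)" using in_take[OF that(3)] that(4) by simp
    ultimately show ?thesis using all that(1,2) by blast
  qed
  have Fm: "{\<sigma>!j, \<sigma>!i} \<in> T_edges k cls" if "j < length \<sigma>" "0 < j" "i < length \<sigma>" "?adj (\<sigma>!j) (\<sigma>!i)"
    "\<forall>i'<i. \<not> ?adj (\<sigma>!j) (\<sigma>!i')" for i j
    using F_mem[of \<sigma> j i "G_adj k cls", OF dist that] FT by simp
  have len: "0 < length \<sigma>" using pos[of Rv, OF in_verts(3)] by linarith
  have root: "{w, \<sigma>!0} \<in> T_edges k cls" if "w \<in> ?V" "w \<noteq> \<sigma>!0" "?adj w (\<sigma>!0)" for w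
  proof -
    have "pos w \<noteq> 0"
    proof
      assume "pos w = 0"
      hence "\<sigma>!0 = w" using pos[OF that(1)] by simp
      thus False using that(2) by simp
    qed
    thus ?thesis using Fm[of "pos w" 0] pos[OF that(1)] len that by auto
  qed
  have r0: "\<sigma>!0 = Rv"
  proof (cases "\<sigma>!0")
    case (Lit i b)
    hence "i < k" using inV[OF len] by simp
    hence "{Av, Lit i b} \<in> T_edges k cls" using root[of Av] Lit by (simp add: G_adj_def)
    then show ?thesis using T_noR[of Av "Lit i b"] by (auto simp: doubleton_eq_iff)
  next
    case (Cl i)
    hence "i < length cls" using inV[OF len] by simp
    hence "{Av, Cl i} \<in> T_edges k cls" using root[of Av] Cl by (simp add: G_adj_def)
    then show ?thesis using T_noR[of Av "Cl i"] by (auto simp: doubleton_eq_iff)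
  next
    case Pv
    hence "{Lit i0 True, Pv} \<in> T_edges k cls" using root[of "Lit i0 True"] \<open>i0 < k\<close> by (simp add: G_adj_def)
    then show ?thesis using T_noR[of "Lit i0 True" Pv] by (auto simp: doubleton_eq_iff)
  next
    case Qv
    hence "{Lit i0 True, Qv} \<in> T_edges k cls" using root[of "Lit i0 True"] \<open>i0 < k\<close> by (simp add: G_adj_def)
    then show ?thesis using T_noR[of "Lit i0 True" Qv] by (auto simp: doubleton_eq_iff)
  next
    case Av
    hence "{Lit i0 True, Av} \<in> T_edges k cls" using root[of "Lit i0 True"] \<open>i0 < k\<close> by (simp add: G_adj_def)
    then show ?thesis using T_noR[of "Lit i0 True" Av] by (auto simp: doubleton_eq_iff)
  next
    case Bv
    hence "{Lit i0 True, Bv} \<in> T_edges k cls" using root[of "Lit i0 True"] \<open>i0 < k\<close> by (simp add: G_adj_def)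
    then show ?thesis using T_noR[of "Lit i0 True" Bv] by (auto simp: doubleton_eq_iff)
  next
    case Tv
    hence "{Qv, Tv} \<in> T_edges k cls" using root[of Qv] by (simp add: G_adj_def)
    then show ?thesis using T_noR[of Qv Tv] by (auto simp: doubleton_eq_iff)
  qed simp
  have posR: "pos Rv = 0" using pos_eq[OF len] r0 by simp
  have len2: "1 < length \<sigma>"
  proof -
    have "pos Pv < length \<sigma>" "\<sigma> ! pos Pv = Pv" using pos[of Pv] by auto
    moreover have "pos Pv \<noteq> 0" using calculation r0 by (metis vert.simps)
    ultimately show ?thesis by linarith
  qed
  have pos_ne: "pos v \<noteq> i" if "v \<in> ?V" "\<sigma>!i \<noteq> v" for v i
    using pos[OF that(1)] that(2) by auto
  have posA: "pos Av < length \<sigma>" "\<sigma>!pos Av = Av" using pos[of Av] by simp_all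
  have posB: "pos Bv < length \<sigma>" "\<sigma>!pos Bv = Bv" using pos[of Bv] by simp_all
  have posQ: "pos Qv < length \<sigma>" "\<sigma>!pos Qv = Qv" using pos[of Qv] by simp_all
  have posT: "pos Tv < length \<sigma>" "\<sigma>!pos Tv = Tv" using pos[of Tv] by simp_all
  have posP: "pos Pv < length \<sigma>" "\<sigma>!pos Pv = Pv" using pos[of Pv] by simp_all
  have s10: "\<sigma>!1 \<noteq> \<sigma>!0"
  proof
    assume "\<sigma>!1 = \<sigma>!0"
    moreover have "(1::nat) < length \<sigma>" "(0::nat) < length \<sigma>" using len2 by auto
    ultimately have "(1::nat) = 0" using nth_eq_iff_index_eq[OF dist, of 1 0] by blast
    thus False by simp
  qed
  have p1: "\<sigma>!1 = Pv"
  proof -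
    have s1: "?adj Rv (\<sigma>!1)"
    proof (rule ccontr)
      assume na: "\<not> ?adj Rv (\<sigma>!1)"
      have "{i. i < 1 \<and> ?adj (\<sigma>!i) (\<sigma>!1)} = {}" using na r0 by auto
      moreover have "{i. i < 1 \<and> ?adj (\<sigma>!i) Pv} = {0}" using r0 by (auto simp: G_adj_def)
      moreover have "pos Pv \<noteq> 0" using pos_ne[of Pv 0] r0 by simp
      ultimately show False using Pj[of 1 Pv] len2 by auto
    qed
    have a1: "?adj Av (\<sigma>!1)" using adj_RA[OF s1] .
    have "pos Av \<noteq> 0" using pos_ne[of Av 0] r0 by simp
    moreover have "pos Av \<noteq> 1"
    proof
      assume "pos Av = 1"
      hence "\<sigma>!1 = Av" using posA by simp
      thus False using s1 by (simp add: G_adj_def)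
    qed
    moreover have "\<forall>i'<1. \<not> ?adj Av (\<sigma>!i')" using r0 by (auto simp: G_adj_def)
    ultimately have "{\<sigma>!pos Av, \<sigma>!1} \<in> T_edges k cls" using Fm[of "pos Av" 1] posA a1 len2 by auto
    hence "{Av, \<sigma>!1} \<in> T_edges k cls" using posA by simp
    moreover have "\<sigma>!1 \<noteq> Rv" using s10 r0 by simp
    ultimately have "{Av, \<sigma>!1} = {Pv,Av} \<or> {Av, \<sigma>!1} = {Bv,Tv}" using T_noR[of Av "\<sigma>!1"] by simp
    thus ?thesis by (auto simp: doubleton_eq_iff)
  qed
  have bq: "pos Bv < pos Qv"
  proof (rule ccontr)
    assume "\<not> pos Bv < pos Qv"
    moreover have "pos Bv \<noteq> pos Qv" 
    proof
      assume "pos Bv = pos Qv"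
      hence "Bv = Qv" using posB posQ by metis
      thus False by simp
    qed
    ultimately have qb: "pos Qv < pos Bv" by simp
    have "pos Tv \<noteq> 0" using pos_ne[of Tv 0] r0 by simp
    moreover have "\<forall>i'<pos Qv. \<not> ?adj Tv (\<sigma>!i')"
    proof (intro allI impI notI)
      fix i' assume i': "i' < pos Qv" "?adj Tv (\<sigma>!i')"
      hence "?adj (\<sigma>!i') Tv" using G_sym by blast
      hence "\<sigma>!i' = Bv \<or> \<sigma>!i' = Qv" by (rule adj_T)
      moreover have "i' < length \<sigma>" using i' posQ by simp
      ultimately have "i' = pos Bv \<or> i' = pos Qv" using pos_eq[of i'] by auto
      thus False using i' qb by auto
    qed
    moreover have "?adj Tv Qv" by (simp add: G_adj_def)
    ultimately have "{\<sigma>!pos Tv, \<sigma>!pos Qv} \<in> T_edges k cls" using Fm[of "pos Tv" "pos Qv"] posT posQ by auto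
    hence "{Tv, Qv} \<in> T_edges k cls" using posT posQ by simp
    hence "{Tv, Qv} = {Pv,Av} \<or> {Tv, Qv} = {Bv,Tv}" using T_noR[of Tv Qv] by simp
    thus False by (auto simp: doubleton_eq_iff)
  qed
  have b0: "pos Bv \<noteq> 0" using pos_ne[of Bv 0] r0 by simp
  have b1: "pos Bv \<noteq> 1" using pos_ne[of Bv 1] p1 by simp
  have nT: "\<not> pos Tv < pos Bv"
  proof
    assume tb: "pos Tv < pos Bv"
    have t0: "pos Tv \<noteq> 0" using pos_ne[of Tv 0] r0 by simp
    have "{i. i < pos Tv \<and> ?adj (\<sigma>!i) (\<sigma>!pos Tv)} = {}"
    proof (rule ccontr)
      assume "{i. i < pos Tv \<and> ?adj (\<sigma>!i) (\<sigma>!pos Tv)} \<noteq> {}"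
      then obtain i where i: "i < pos Tv" "?adj (\<sigma>!i) Tv" using posT by auto
      hence "\<sigma>!i = Bv \<or> \<sigma>!i = Qv" by (intro adj_T) simp
      moreover have "i < length \<sigma>" using i posT by simp
      ultimately have "i = pos Bv \<or> i = pos Qv" using pos_eq[of i] by auto
      thus False using i tb bq by auto
    qed
    moreover have "0 \<in> {i. i < pos Tv \<and> ?adj (\<sigma>!i) Bv}" using t0 r0 by (simp add: G_adj_def)
    ultimately show False using Pj[of "pos Tv" Bv] t0 posT tb by auto
  qed
  have nC: "\<sigma>!l \<noteq> Cl j'" if l: "l < pos Bv" for l j'
  proof
    assume lc: "\<sigma>!l = Cl j'"
    have ll: "l < length \<sigma>" using l posB by simp
    have sub: "{i. i < pos Bv \<and> ?adj (\<sigma>!i) (\<sigma>!pos Bv)} \<subseteq> {i. i < pos Bv \<and> ?adj (\<sigma>!i) Qv}"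
    proof safe
      fix i assume i: "i < pos Bv" "?adj (\<sigma>!i) (\<sigma>!pos Bv)"
      have "\<sigma>!i \<noteq> Qv" using pos_eq[of i] i bq posB by auto
      thus "?adj (\<sigma>!i) Qv" using adj_BQ[of "\<sigma>!i"] i posB by simp
    qed
    have "Cl j' \<in> ?V" using inV[OF ll] lc by simp
    hence "l \<in> {i. i < pos Bv \<and> ?adj (\<sigma>!i) Qv}" "l \<notin> {i. i < pos Bv \<and> ?adj (\<sigma>!i) (\<sigma>!pos Bv)}"
      using lc l posB by (auto simp: G_adj_def)
    hence "{i. i < pos Bv \<and> ?adj (\<sigma>!i) (\<sigma>!pos Bv)} \<subset> {i. i < pos Bv \<and> ?adj (\<sigma>!i) Qv}" using sub by blast
    thus False using Pj[of "pos Bv" Qv] b0 posB bq by auto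
  qed
  have early: "\<sigma>!l = Rv \<or> \<sigma>!l = Pv \<or> \<sigma>!l = Av \<or> (\<exists>i b. \<sigma>!l = Lit i b)" if l: "l < pos Bv" for l
  proof -
    have ll: "l < length \<sigma>" using l posB by simp
    have "\<sigma>!l \<noteq> Bv" "\<sigma>!l \<noteq> Qv" "\<sigma>!l \<noteq> Tv" using pos_eq[OF ll] l bq nT by auto
    moreover have "\<forall>j'. \<sigma>!l \<noteq> Cl j'" using nC[OF l] by blast
    ultimately show ?thesis by (cases "\<sigma>!l") auto
  qed
  define \<alpha> where "\<alpha> i = (pos (Lit i True) < pos (Lit i False))" for i
  have "satisfiable k cls" unfolding satisfiable_def
  proof (intro exI ballI)
    fix C assume C: "C \<in> set cls"
    show "\<exists>(i,b)\<in>set C. \<alpha> i = b"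
    proof (rule ccontr)
      assume nh: "\<not> (\<exists>(i,b)\<in>set C. \<alpha> i = b)"
      hence nh': "\<alpha> i \<noteq> b" if "(i,b) \<in> set C" for i b using that by auto
      obtain cj where cj: "cj < length cls" "cls!cj = C" using C in_set_conv_nth[of C cls] by blast
      have cV: "Cl cj \<in> ?V" using cj by simp
      have pc: "pos Bv \<le> pos (Cl cj)"
      proof (rule ccontr)
        assume "\<not> pos Bv \<le> pos (Cl cj)"
        hence "pos (Cl cj) < pos Bv" by simp
        from nC[OF this, of cj] show False using pos[OF cV] by simp
      qed
      define Q where "Q s \<longleftrightarrow> s = pos Bv \<or> (s < pos Bv \<and> (\<exists>i b. \<sigma>!s = Lit i b \<and> pos (Lit i (\<not>b)) < s))" for s
      define s where "s = (LEAST s. Q s)"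
      have "Q (pos Bv)" unfolding Q_def by simp
      hence Qs: "Q s" and sm: "s \<le> pos Bv" unfolding s_def by (auto intro: LeastI Least_le)
      have claimA: "\<alpha> i = b" if "l < s" "\<sigma>!l = Lit i b" for l i b
      proof -
        have lB: "l < pos Bv" using that sm by simp
        have ll: "l < length \<sigma>" using lB posB by simp
        have "\<not> Q l" using that(1) unfolding s_def by (rule not_less_Least)
        hence n1: "\<not> pos (Lit i (\<not>b)) < l" using lB that(2) unfolding Q_def by auto
        have "Lit i b \<in> ?V" using inV[OF ll] that(2) by simp
        hence "Lit i (\<not>b) \<in> ?V" by simp
        hence "pos (Lit i (\<not>b)) \<noteq> l" using pos_ne[of "Lit i (\<not>b)" l] that(2) by simp
        hence lt: "pos (Lit i b) < pos (Lit i (\<not>b))" using n1 pos_eq[OF ll] that(2) by simp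
        show ?thesis using lt unfolding \<alpha>_def by (cases b) auto
      qed
      have adjc: "?adj (\<sigma>!l) (Cl cj)" if "l < s" for l
      proof -
        have lB: "l < pos Bv" using that sm by simp
        have ll: "l < length \<sigma>" using lB posB by simp
        from early[OF lB] show ?thesis
        proof (elim disjE exE)
          fix i b assume lb: "\<sigma>!l = Lit i b"
          have "\<alpha> i = b" using claimA[OF that lb] .
          hence "(i,b) \<notin> set (cls ! cj)" using nh' cj(2) by blast
          moreover have "i < k" using inV[OF ll] lb by simp
          ultimately show ?thesis using lb cj by (simp add: G_adj_def)
        qed (use cj in \<open>auto simp: G_adj_def\<close>)
      qed
      show False
      proof (cases "s = pos Bv")
        case True
        have "{i. i < pos Bv \<and> ?adj (\<sigma>!i) (\<sigma>!pos Bv)} \<subset> {i. i < pos Bv \<and> ?adj (\<sigma>!i) (Cl cj)}"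
        proof
          show "{i. i < pos Bv \<and> ?adj (\<sigma>!i) (\<sigma>!pos Bv)} \<subseteq> {i. i < pos Bv \<and> ?adj (\<sigma>!i) (Cl cj)}"
            using adjc True by auto
          have "1 \<in> {i. i < pos Bv \<and> ?adj (\<sigma>!i) (Cl cj)}" using adjc True b0 b1 by simp
          moreover have "1 \<notin> {i. i < pos Bv \<and> ?adj (\<sigma>!i) (\<sigma>!pos Bv)}" using p1 posB by (simp add: G_adj_def)
          ultimately show "{i. i < pos Bv \<and> ?adj (\<sigma>!i) (\<sigma>!pos Bv)} \<noteq> {i. i < pos Bv \<and> ?adj (\<sigma>!i) (Cl cj)}" by blast
        qed
        thus False using Pj[of "pos Bv" "Cl cj"] b0 posB cV pc by auto
      next
        case False
        with Qs obtain i b where sB: "s < pos Bv" and sl: "\<sigma>!s = Lit i b" and i0: "pos (Lit i (\<not>b)) < s"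
          unfolding Q_def by auto
        have sl': "s < length \<sigma>" using sB posB by simp
        have "Lit i b \<in> ?V" using inV[OF sl'] sl by simp
        hence nV: "Lit i (\<not>b) \<in> ?V" by simp
        have "{j. j < s \<and> ?adj (\<sigma>!j) (\<sigma>!s)} \<subset> {j. j < s \<and> ?adj (\<sigma>!j) (Cl cj)}"
        proof
          show "{j. j < s \<and> ?adj (\<sigma>!j) (\<sigma>!s)} \<subseteq> {j. j < s \<and> ?adj (\<sigma>!j) (Cl cj)}"
            using adjc by auto
          have "pos (Lit i (\<not>b)) \<in> {j. j < s \<and> ?adj (\<sigma>!j) (Cl cj)}" using adjc i0 by simp
          moreover have "pos (Lit i (\<not>b)) \<notin> {j. j < s \<and> ?adj (\<sigma>!j) (\<sigma>!s)}"
            using pos[OF nV] sl by (simp add: G_adj_def)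
          ultimately show "{j. j < s \<and> ?adj (\<sigma>!j) (\<sigma>!s)} \<noteq> {j. j < s \<and> ?adj (\<sigma>!j) (Cl cj)}" by blast
        qed
        moreover have "1 \<le> s" using i0 by simp
        ultimately show False using Pj[of s "Cl cj"] sl' cV pc sB by auto
      qed
    qed
  qed
  with uns show False by simp
qed


theorem lemma12:
  fixes k :: nat and cls :: "clause list"
  assumes "wf_instance k cls"
    and "\<not> satisfiable k cls"
  shows "(\<forall>\<sigma>. is_MNS (verts k cls) (G_adj k cls) \<sigma> \<longrightarrow> F_tree (G_adj k cls) \<sigma> \<noteq> T_edges k cls)
       \<and> (\<forall>\<sigma>. is_MCS (verts k cls) (G_adj k cls) \<sigma> \<longrightarrow> F_tree (G_adj k cls) \<sigma> \<noteq> T_edges k cls)"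
proof (intro conjI allI impI notI)
  fix \<sigma> assume h: "is_MNS (verts k cls) (G_adj k cls) \<sigma>" and FT: "F_tree (G_adj k cls) \<sigma> = T_edges k cls"
  have "is_ordering (verts k cls) \<sigma>" using h unfolding is_MNS_def by (rule conjunct1)
  from main[OF assms this mns_P[OF h] FT] show False .
next
  fix \<sigma> assume h: "is_MCS (verts k cls) (G_adj k cls) \<sigma>" and FT: "F_tree (G_adj k cls) \<sigma> = T_edges k cls"
  have "is_ordering (verts k cls) \<sigma>" using h unfolding is_MCS_def by (rule conjunct1)
  from main[OF assms this mcs_P[OF h G_sym] FT] show False .
qed

end
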